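(* Let $\mathcal{R}$ be a left-connected rewriting system over a signature $\Sigma$, let $L_i,L_j$ be left-hand sides of rules of $\mathcal{R}$, and let $S_{ij\gamma}$ (with $\epsilon_{ij\gamma}\colon L_i+L_j\to S_{ij\gamma}$) be a hyperedge gluing and $S_{ij\gamma'}$ (with $\epsilon_{ij\gamma'}\colon S_{ij\gamma}\to S_{ij\gamma'}$) a subsequent node gluing, as described below, such that $S_{ij\gamma'}$ yields a critical pair. Then for every left-hand side $L$ of a rule of $\mathcal{R}$ and every convex match $m\colon L\to S_{ij\gamma}$ (into the ma-cospan $in(S_{ij\gamma})\to S_{ij\gamma}\leftarrow out(S_{ij\gamma})$), the composite $m;\epsilon_{ij\gamma'}\colon L\to S_{ij\gamma'}$ is a convex match (into the ma-cospan $in(S_{ij\gamma'})\to S_{ij\gamma'}\leftarrow out(S_{ij\gamma'})$).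
   Context: A signature $\Sigma$ is a set of triples $(x,n,m)$ (label, arity, coarity). A $\Sigma$-hypergraph $G=(V,E,s,t,l)$ has finite sets $V$ (nodes), $E$ (hyperedges), maps $s,t\colon E\to V^*$ (lists of sources/targets) and a labelling $l\colon E\to\Sigma$ sending a hyperedge with $n$ sources and $m$ targets to some $(x,n,m)$. Morphisms preserve sources, targets and labels; they form the category $\mathbf{Hyp}_\Sigma$, where colimits are computed componentwise and monos/epis are injective/surjective on nodes and hyperedges. Composition is written $f;g$; $\iota_1,\iota_2$ are coprojections. A hypergraph is discrete if it has no hyperedges. A path is a list of hyperedges $[e_1,\dots,e_n]$ with some target of $e_k$ equal to a source of $e_{k+1}$ for each $k$; it goes from $v$ to $v'$ if $v$ is a source of $e_1$ and $v'$ a target of $e_n$; a cycle is a path with some source of $e_1$ a target of $e_n$. In-degree (out-degree) of a node $v$: number of pairs $(e,i)$ with $v$ the $i$-th target (source) of $e$; $in(H)$, $out(H)$: nodes of in-degree $0$, out-degree $0$. $H$ is ma (monogamous acyclic) if it has no cycle and all in- and out-degrees are $\le 1$. A cospan $I\to H\leftarrow O$ with $I,O$ discrete is an ma-cospan if $H$ is ma and the legs are mono with images $in(H)$ and $out(H)$. $H$ is strongly connected if for all $x\in in(H)$, $y\in out(H)$ there is a path from $x$ to $y$. A left-connected rule is a span $L\xleftarrow{[i_L,o_L]}K=I+O\xrightarrow{[i_R,o_R]}R$ with $I,O$ discrete, $I\to L\leftarrow O$, $I\to R\leftarrow O$ ma-cospans, $[i_L,o_L]$ mono, $L$ strongly connected;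 a left-connected rewriting system is a finite set of such rules. A convex match is a mono $m\colon L\to G$ such that for any nodes $v,v'$ of $m(L)$ and any path in $G$ from $v$ to $v'$, all hyperedges of the path lie in $m(L)$; for left-connected systems it is known that every mono match of a left-hand side is convex. Derivations between ma-cospans are given by a rule, a convex match and a double pushout diagram commuting with the interface. A pre-critical pair is a pair of derivations from a common ma-cospan $n\to S\leftarrow m$ with matches $m_1\colon L_i\to S$, $m_2\colon L_j\to S$ such that $[m_1,m_2]$ is epi; it is parallel if $m_1$ factors through the pushout complement $C_2\to S$ of the second derivation and $m_2$ through the pushout complement $C_1\to S$ of the first; critical if not parallel. Hyperedge gluing: let $M$ be a nonempty set of pairs $(e,e')$, $e$ a hyperedge of $L_i$, $e'$ of $L_j$, with equal labels, no hyperedge in two pairs; $\gamma$ has hyperedges $M$ and nodes the pairs $(v,v')$ that are $k$-th sources (or $k$-th targets) of $e,e'$ for some $(e,e')\in M$ and $k$, with projections $p_1^\gamma\colon\gamma\to L_i$, $p_2^\gamma\colon\gamma\to L_j$; $\epsilon_{ij\gamma}\colon L_i+L_j\to S_{ij\gamma}$ is the coequaliser of $p_1^\gamma;\iota_1$ and $p_2^\gamma;\iota_2$. Node gluing: with $I_1=in(S_{ij\gamma})\cap\epsilon_{ij\gamma}(\iota_1(in(L_i)))$, $I_2=in(S_{ij\gamma})\cap\epsilon_{ij\gamma}(\iota_2(in(L_j)))$, $O_1=out(S_{ij\gamma})\cap\epsilon_{ij\gamma}(\iota_1(out(L_i)))$, $O_2=out(S_{ij\gamma})\cap\epsilon_{ij\gamma}(\iota_2(out(L_j)))$,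 let $N$ be a set of pairs in $I_1\times O_2$, or in $I_2\times O_1$, with no element in two pairs; $\gamma'$ is the discrete hypergraph with nodes $N$ and projections $p_1^{\gamma'},p_2^{\gamma'}\colon\gamma'\to S_{ij\gamma}$; $\epsilon_{ij\gamma'}\colon S_{ij\gamma}\to S_{ij\gamma'}$ is their coequaliser. $S_{ij\gamma'}$ yields a critical pair if the matches $\iota_k;\epsilon_{ij\gamma};\epsilon_{ij\gamma'}$ ($k=1,2$) are mono, $in(S_{ij\gamma'})\xrightarrow{\subseteq}S_{ij\gamma'}\xleftarrow{\subseteq}out(S_{ij\gamma'})$ is an ma-cospan, and the derivations from it with these matches form a critical pair. *)

theory Defs
  imports Main
begin

record ('v,'e,'l) hyp =
  nodes :: "'v set"
  edges :: "'e set"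
  src :: "'e \<Rightarrow> 'v list"
  tgt :: "'e \<Rightarrow> 'v list"
  lab :: "'e \<Rightarrow> 'l"

definition wf_hyp :: "('l \<times> nat \<times> nat) set \<Rightarrow> ('v,'e,'l) hyp \<Rightarrow> bool" where
  "wf_hyp Sig G \<longleftrightarrow> finite (nodes G) \<and> finite (edges G) \<and>
     (\<forall>e\<in>edges G. set (src G e) \<subseteq> nodes G \<and> set (tgt G e) \<subseteq> nodes G \<and>
        (lab G e, length (src G e), length (tgt G e)) \<in> Sig)"

text \<open>Morphisms: a node map and a hyperedge map (only relevant on carriers).\<close>

type_synonym ('v,'e,'w,'f) morph = "('v \<Rightarrow> 'w) \<times> ('e \<Rightarrow> 'f)"

definition hom :: "('v,'e,'l) hyp \<Rightarrow> ('w,'f,'l) hyp \<Rightarrow> ('v,'e,'w,'f) morph \<Rightarrow> bool" where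
  "hom G H f \<longleftrightarrow> (\<forall>v\<in>nodes G. fst f v \<in> nodes H) \<and>
     (\<forall>e\<in>edges G. snd f e \<in> edges H \<and> src H (snd f e) = map (fst f) (src G e) \<and>
        tgt H (snd f e) = map (fst f) (tgt G e) \<and> lab H (snd f e) = lab G e)"

definition mcomp :: "('v,'e,'w,'f) morph \<Rightarrow> ('w,'f,'x,'y) morph \<Rightarrow> ('v,'e,'x,'y) morph" where
  "mcomp f g = (fst g \<circ> fst f, snd g \<circ> snd f)"

definition mono :: "('v,'e,'l) hyp \<Rightarrow> ('w,'f,'l) hyp \<Rightarrow> ('v,'e,'w,'f) morph \<Rightarrow> bool" where
  "mono G H f \<longleftrightarrow> hom G H f \<and> inj_on (fst f) (nodes G) \<and> inj_on (snd f) (edges G)"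

definition disc :: "'a set \<Rightarrow> ('a,'e,'l) hyp" where
  "disc N = \<lparr>nodes = N, edges = {}, src = (\<lambda>_. []), tgt = (\<lambda>_. []), lab = (\<lambda>_. undefined)\<rparr>"

definition po_rel :: "'a set \<Rightarrow> ('a \<Rightarrow> 'b) \<Rightarrow> ('a \<Rightarrow> 'c) \<Rightarrow> ('b + 'c) rel" where
  "po_rel A f g = {(Inl (f a), Inr (g a)) | a. a \<in> A}"

definition set_pushout :: "'a set \<Rightarrow> 'b set \<Rightarrow> 'c set \<Rightarrow> 'd set \<Rightarrow>
    ('a \<Rightarrow> 'b) \<Rightarrow> ('a \<Rightarrow> 'c) \<Rightarrow> ('b \<Rightarrow> 'd) \<Rightarrow> ('c \<Rightarrow> 'd) \<Rightarrow> bool" where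
  "set_pushout A B C D f g f' g' \<longleftrightarrow>
     (\<forall>a\<in>A. f' (f a) = g' (g a)) \<and> f' ` B \<union> g' ` C = D \<and>
     (\<forall>x\<in>B <+> C. \<forall>y\<in>B <+> C. (case_sum f' g' x = case_sum f' g' y) \<longleftrightarrow>
        (x, y) \<in> (po_rel A f g \<union> (po_rel A f g)\<inverse>)\<^sup>*)"

definition hyp_pushout :: "('a,'ae,'l) hyp \<Rightarrow> ('b,'be,'l) hyp \<Rightarrow> ('c,'ce,'l) hyp \<Rightarrow> ('d,'de,'l) hyp \<Rightarrow>
    ('a,'ae,'b,'be) morph \<Rightarrow> ('a,'ae,'c,'ce) morph \<Rightarrow> ('b,'be,'d,'de) morph \<Rightarrow> ('c,'ce,'d,'de) morph \<Rightarrow> bool" where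
  "hyp_pushout A B C D f g f' g' \<longleftrightarrow> hom A B f \<and> hom A C g \<and> hom B D f' \<and> hom C D g' \<and>
     set_pushout (nodes A) (nodes B) (nodes C) (nodes D) (fst f) (fst g) (fst f') (fst g') \<and>
     set_pushout (edges A) (edges B) (edges C) (edges D) (snd f) (snd g) (snd f') (snd g')"

definition set_coeq :: "'a set \<Rightarrow> 'b set \<Rightarrow> 'd set \<Rightarrow> ('a \<Rightarrow> 'b) \<Rightarrow> ('a \<Rightarrow> 'b) \<Rightarrow> ('b \<Rightarrow> 'd) \<Rightarrow> bool" where
  "set_coeq A B D f g q \<longleftrightarrow>
     (\<forall>a\<in>A. q (f a) = q (g a)) \<and> q ` B = D \<and>
     (\<forall>x\<in>B. \<forall>y\<in>B. q x = q y \<longleftrightarrow>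
        (x, y) \<in> ({(f a, g a) | a. a \<in> A} \<union> {(f a, g a) | a. a \<in> A}\<inverse>)\<^sup>*)"

definition hyp_coeq :: "('a,'ae,'l) hyp \<Rightarrow> ('b,'be,'l) hyp \<Rightarrow> ('d,'de,'l) hyp \<Rightarrow>
    ('a,'ae,'b,'be) morph \<Rightarrow> ('a,'ae,'b,'be) morph \<Rightarrow> ('b,'be,'d,'de) morph \<Rightarrow> bool" where
  "hyp_coeq A B D f g q \<longleftrightarrow> hom A B f \<and> hom A B g \<and> hom B D q \<and>
     set_coeq (nodes A) (nodes B) (nodes D) (fst f) (fst g) (fst q) \<and>
     set_coeq (edges A) (edges B) (edges D) (snd f) (snd g) (snd q)"

definition is_path :: "('v,'e,'l) hyp \<Rightarrow> 'e list \<Rightarrow> bool" where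
  "is_path G p \<longleftrightarrow> p \<noteq> [] \<and> set p \<subseteq> edges G \<and>
     (\<forall>k. Suc k < length p \<longrightarrow> set (tgt G (p ! k)) \<inter> set (src G (p ! Suc k)) \<noteq> {})"

definition path_from_to :: "('v,'e,'l) hyp \<Rightarrow> 'e list \<Rightarrow> 'v \<Rightarrow> 'v \<Rightarrow> bool" where
  "path_from_to G p v v' \<longleftrightarrow> is_path G p \<and> v \<in> set (src G (hd p)) \<and> v' \<in> set (tgt G (last p))"

definition is_cycle :: "('v,'e,'l) hyp \<Rightarrow> 'e list \<Rightarrow> bool" where
  "is_cycle G p \<longleftrightarrow> is_path G p \<and> set (src G (hd p)) \<inter> set (tgt G (last p)) \<noteq> {}"

definition indeg :: "('v,'e,'l) hyp \<Rightarrow> 'v \<Rightarrow> nat" where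
  "indeg G v = card {(e, i). e \<in> edges G \<and> i < length (tgt G e) \<and> tgt G e ! i = v}"

definition outdeg :: "('v,'e,'l) hyp \<Rightarrow> 'v \<Rightarrow> nat" where
  "outdeg G v = card {(e, i). e \<in> edges G \<and> i < length (src G e) \<and> src G e ! i = v}"

definition inputs :: "('v,'e,'l) hyp \<Rightarrow> 'v set" where
  "inputs G = {v \<in> nodes G. indeg G v = 0}"

definition outputs :: "('v,'e,'l) hyp \<Rightarrow> 'v set" where
  "outputs G = {v \<in> nodes G. outdeg G v = 0}"

definition ma :: "('v,'e,'l) hyp \<Rightarrow> bool" where
  "ma G \<longleftrightarrow> (\<nexists>p. is_cycle G p) \<and> (\<forall>v\<in>nodes G. indeg G v \<le> 1 \<and> outdeg G v \<le> 1)"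

text \<open>Cospan I -> G <- O with I, O discrete (given by their node sets and the node maps of the legs).\<close>

definition ma_cospan :: "('v,'e,'l) hyp \<Rightarrow> 'i set \<Rightarrow> 'o set \<Rightarrow> ('i \<Rightarrow> 'v) \<Rightarrow> ('o \<Rightarrow> 'v) \<Rightarrow> bool" where
  "ma_cospan G Ii Oo fi fo \<longleftrightarrow> ma G \<and> inj_on fi Ii \<and> fi ` Ii = inputs G \<and> inj_on fo Oo \<and> fo ` Oo = outputs G"

definition strongly_connected :: "('v,'e,'l) hyp \<Rightarrow> bool" where
  "strongly_connected H \<longleftrightarrow> (\<forall>x\<in>inputs H. \<forall>y\<in>outputs H. \<exists>p. path_from_to H p x y)"

definition convex_match :: "('v,'e,'l) hyp \<Rightarrow> ('w,'f,'l) hyp \<Rightarrow> ('v,'e,'w,'f) morph \<Rightarrow> bool" where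
  "convex_match L G m \<longleftrightarrow> mono L G m \<and>
     (\<forall>v\<in>fst m ` nodes L. \<forall>v'\<in>fst m ` nodes L. \<forall>p. path_from_to G p v v' \<longrightarrow> set p \<subseteq> snd m ` edges L)"

text \<open>A rule L <- I+O -> R; the discrete interfaces I and O are given by node sets
  rin, rout, and the coproduct I+O is represented with Inl/Inr.\<close>

record ('v,'e,'l,'k) rule =
  lhs :: "('v,'e,'l) hyp"
  rhs :: "('v,'e,'l) hyp"
  rin :: "'k set"
  rout :: "'k set"
  iL :: "'k \<Rightarrow> 'v"
  oL :: "'k \<Rightarrow> 'v"
  iR :: "'k \<Rightarrow> 'v"
  oR :: "'k \<Rightarrow> 'v"

definition rule_K :: "('v,'e,'l,'k) rule \<Rightarrow> ('k + 'k, 'e, 'l) hyp" where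
  "rule_K r = disc (Inl ` rin r \<union> Inr ` rout r)"

definition rule_kL :: "('v,'e,'l,'k) rule \<Rightarrow> ('k + 'k, 'e, 'v, 'e) morph" where
  "rule_kL r = (case_sum (iL r) (oL r), id)"

definition rule_kR :: "('v,'e,'l,'k) rule \<Rightarrow> ('k + 'k, 'e, 'v, 'e) morph" where
  "rule_kR r = (case_sum (iR r) (oR r), id)"

definition left_connected_rule :: "('l \<times> nat \<times> nat) set \<Rightarrow> ('v,'e,'l,'k) rule \<Rightarrow> bool" where
  "left_connected_rule Sig r \<longleftrightarrow> wf_hyp Sig (lhs r) \<and> wf_hyp Sig (rhs r) \<and>
     finite (rin r) \<and> finite (rout r) \<and>
     ma_cospan (lhs r) (rin r) (rout r) (iL r) (oL r) \<and>
     ma_cospan (rhs r) (rin r) (rout r) (iR r) (oR r) \<and>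
     mono (rule_K r) (lhs r) (rule_kL r) \<and>
     strongly_connected (lhs r)"

definition left_connected_system :: "('l \<times> nat \<times> nat) set \<Rightarrow> ('v,'e,'l,'k) rule set \<Rightarrow> bool" where
  "left_connected_system Sig Rs \<longleftrightarrow> finite Rs \<and> (\<forall>r\<in>Rs. left_connected_rule Sig r)"

text \<open>Derivation from the ma-cospan I -fi-> G <-fo- O with rule r and convex match m:
  pushout squares K->L->G = K->C->G and K->R->H = K->C->H, an interface map
  I+O -> C (ji, jo) commuting with the legs of G, and result ma-cospan I -> H <- O.\<close>

definition derivation :: "('l \<times> nat \<times> nat) set \<Rightarrow> 'i set \<Rightarrow> 'o set \<Rightarrow> ('i \<Rightarrow> 'a) \<Rightarrow> ('o \<Rightarrow> 'a) \<Rightarrow>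
    ('a,'f,'l) hyp \<Rightarrow> ('v,'e,'l,'k) rule \<Rightarrow> ('v,'e,'a,'f) morph \<Rightarrow>
    ('c,'g,'l) hyp \<Rightarrow> ('k + 'k,'e,'c,'g) morph \<Rightarrow> ('c,'g,'a,'f) morph \<Rightarrow> ('c,'g,'h,'x) morph \<Rightarrow>
    ('h,'x,'l) hyp \<Rightarrow> ('v,'e,'h,'x) morph \<Rightarrow> ('i \<Rightarrow> 'c) \<Rightarrow> ('o \<Rightarrow> 'c) \<Rightarrow> bool" where
  "derivation Sig Ii Oo fi fo G r m C k c1 c2 H n ji jo \<longleftrightarrow>
     wf_hyp Sig G \<and> ma_cospan G Ii Oo fi fo \<and> convex_match (lhs r) G m \<and>
     wf_hyp Sig C \<and> wf_hyp Sig H \<and>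
     hyp_pushout (rule_K r) (lhs r) C G (rule_kL r) k m c1 \<and>
     hyp_pushout (rule_K r) (rhs r) C H (rule_kR r) k n c2 \<and>
     ji ` Ii \<subseteq> nodes C \<and> jo ` Oo \<subseteq> nodes C \<and>
     (\<forall>x\<in>Ii. fst c1 (ji x) = fi x) \<and> (\<forall>x\<in>Oo. fst c1 (jo x) = fo x) \<and>
     ma_cospan H Ii Oo (fst c2 \<circ> ji) (fst c2 \<circ> jo)"

definition factors_through :: "('v,'e,'l) hyp \<Rightarrow> ('v,'e,'a,'f) morph \<Rightarrow> ('c,'g,'l) hyp \<Rightarrow> ('c,'g,'a,'f) morph \<Rightarrow> bool" where
  "factors_through L m C c \<longleftrightarrow> (\<exists>h. hom L C h \<and>
     (\<forall>v\<in>nodes L. fst c (fst h v) = fst m v) \<and> (\<forall>e\<in>edges L. snd c (snd h e) = snd m e))"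

text \<open>The derivations from I -> G <- O with rule r1, match m1 and rule r2, match m2
  form a critical pair: a pre-critical pair ([m1,m2] epi) which is not parallel.
  Pushout complements / pushouts are represented in the types of G resp. G + R
  (they are unique up to isomorphism, so this is no restriction).\<close>

definition critical_pair :: "('l \<times> nat \<times> nat) set \<Rightarrow> 'i set \<Rightarrow> 'o set \<Rightarrow> ('i \<Rightarrow> 'a) \<Rightarrow> ('o \<Rightarrow> 'a) \<Rightarrow>
    ('a,'f,'l) hyp \<Rightarrow> ('v,'e,'l,'k) rule \<Rightarrow> ('v,'e,'a,'f) morph \<Rightarrow>
    ('v,'e,'l,'k) rule \<Rightarrow> ('v,'e,'a,'f) morph \<Rightarrow> bool" where
  "critical_pair Sig Ii Oo fi fo G r1 m1 r2 m2 \<longleftrightarrow>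
     (\<exists>(C1 :: ('a,'f,'l) hyp) k1 c11 c12 (H1 :: ('a + 'v, 'f + 'e, 'l) hyp) n1 ji1 jo1
       (C2 :: ('a,'f,'l) hyp) k2 c21 c22 (H2 :: ('a + 'v, 'f + 'e, 'l) hyp) n2 ji2 jo2.
        derivation Sig Ii Oo fi fo G r1 m1 C1 k1 c11 c12 H1 n1 ji1 jo1 \<and>
        derivation Sig Ii Oo fi fo G r2 m2 C2 k2 c21 c22 H2 n2 ji2 jo2 \<and>
        nodes G = fst m1 ` nodes (lhs r1) \<union> fst m2 ` nodes (lhs r2) \<and>
        edges G = snd m1 ` edges (lhs r1) \<union> snd m2 ` edges (lhs r2) \<and>
        \<not> (factors_through (lhs r1) m1 C2 c21 \<and> factors_through (lhs r2) m2 C1 c11))"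

definition hyperedge_gluing_set :: "('v,'e,'l) hyp \<Rightarrow> ('v,'e,'l) hyp \<Rightarrow> ('e \<times> 'e) set \<Rightarrow> bool" where
  "hyperedge_gluing_set Li Lj M \<longleftrightarrow> M \<noteq> {} \<and> M \<subseteq> edges Li \<times> edges Lj \<and>
     (\<forall>(e, e')\<in>M. lab Li e = lab Lj e' \<and> length (src Li e) = length (src Lj e') \<and>
                  length (tgt Li e) = length (tgt Lj e')) \<and>
     inj_on fst M \<and> inj_on snd M"

definition gamma :: "('v,'e,'l) hyp \<Rightarrow> ('v,'e,'l) hyp \<Rightarrow> ('e \<times> 'e) set \<Rightarrow> ('v \<times> 'v, 'e \<times> 'e, 'l) hyp" where
  "gamma Li Lj M = \<lparr>
     nodes = {(v, v'). \<exists>(e, e')\<in>M. \<exists>k.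
        (k < length (src Li e) \<and> k < length (src Lj e') \<and> src Li e ! k = v \<and> src Lj e' ! k = v') \<or>
        (k < length (tgt Li e) \<and> k < length (tgt Lj e') \<and> tgt Li e ! k = v \<and> tgt Lj e' ! k = v')},
     edges = M,
     src = (\<lambda>(e, e'). zip (src Li e) (src Lj e')),
     tgt = (\<lambda>(e, e'). zip (tgt Li e) (tgt Lj e')),
     lab = (\<lambda>(e, e'). lab Li e)\<rparr>"

text \<open>Node gluing data N for S with e1 : Li -> S, e2 : Lj -> S (the two components of epsilon).\<close>

definition node_gluing_set :: "('a,'f,'l) hyp \<Rightarrow> ('v,'e,'l) hyp \<Rightarrow> ('v,'e,'l) hyp \<Rightarrow>
    ('v,'e,'a,'f) morph \<Rightarrow> ('v,'e,'a,'f) morph \<Rightarrow> ('a \<times> 'a) set \<Rightarrow> bool" where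
  "node_gluing_set S Li Lj e1 e2 N \<longleftrightarrow>
     (let I1 = inputs S \<inter> fst e1 ` inputs Li; I2 = inputs S \<inter> fst e2 ` inputs Lj;
          O1 = outputs S \<inter> fst e1 ` outputs Li; O2 = outputs S \<inter> fst e2 ` outputs Lj
      in (N \<subseteq> I1 \<times> O2 \<or> N \<subseteq> I2 \<times> O1) \<and>
         (\<forall>p\<in>N. \<forall>q\<in>N. p \<noteq> q \<longrightarrow> {fst p, snd p} \<inter> {fst q, snd q} = {}))"

definition yields_critical_pair :: "('l \<times> nat \<times> nat) set \<Rightarrow> ('v,'e,'l,'k) rule \<Rightarrow> ('v,'e,'l,'k) rule \<Rightarrow>
    ('b,'g,'l) hyp \<Rightarrow> ('v,'e,'b,'g) morph \<Rightarrow> ('v,'e,'b,'g) morph \<Rightarrow> bool" where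
  "yields_critical_pair Sig ri rj S' m1 m2 \<longleftrightarrow>
     mono (lhs ri) S' m1 \<and> mono (lhs rj) S' m2 \<and>
     ma_cospan S' (inputs S') (outputs S') id id \<and>
     critical_pair Sig (inputs S') (outputs S') id id S' ri m1 rj m2"

end

theory Submission
  imports Defs
begin

lemma is_path_Cons:
  "is_path G (e # p) \<longleftrightarrow> e \<in> edges G \<and> (p = [] \<or> (is_path G p \<and> set (tgt G e) \<inter> set (src G (hd p)) \<noteq> {}))"
proof (cases p)
  case Nil then show ?thesis by (simp add: is_path_def)
next
  case (Cons a p')
  have "(\<forall>k. Suc k < length (e # a # p') \<longrightarrow> set (tgt G ((e # a # p') ! k)) \<inter> set (src G ((e # a # p') ! Suc k)) \<noteq> {})
     \<longleftrightarrow> set (tgt G e) \<inter> set (src G a) \<noteq> {} \<and>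
        (\<forall>k. Suc k < length (a # p') \<longrightarrow> set (tgt G ((a # p') ! k)) \<inter> set (src G ((a # p') ! Suc k)) \<noteq> {})"
    (is "?A \<longleftrightarrow> ?B")
  proof
    assume A: ?A
    show ?B
    proof
      show "set (tgt G e) \<inter> set (src G a) \<noteq> {}" using A[rule_format, of 0] by simp
      show "\<forall>k. Suc k < length (a # p') \<longrightarrow> set (tgt G ((a # p') ! k)) \<inter> set (src G ((a # p') ! Suc k)) \<noteq> {}"
        using A by (metis Suc_less_eq length_Cons nth_Cons_Suc)
    qed
  next
    assume B: ?B
    show ?A
    proof (intro allI impI)
      fix k assume "Suc k < length (e # a # p')"
      then show "set (tgt G ((e # a # p') ! k)) \<inter> set (src G ((e # a # p') ! Suc k)) \<noteq> {}"
        using B by (cases k) auto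
    qed
  qed
  then show ?thesis using Cons by (auto simp: is_path_def)
qed

lemma is_path_append:
  "p \<noteq> [] \<Longrightarrow> q \<noteq> [] \<Longrightarrow> is_path G (p @ q) \<longleftrightarrow>
     is_path G p \<and> is_path G q \<and> set (tgt G (last p)) \<inter> set (src G (hd q)) \<noteq> {}"
proof (induction p)
  case Nil then show ?case by simp
next
  case (Cons a p)
  show ?case
  proof (cases "p = []")
    case True then show ?thesis using Cons.prems by (simp add: is_path_Cons)
  next
    case False
    then show ?thesis using Cons by (auto simp: is_path_Cons)
  qed
qed

lemma hom_is_path: "hom G H f \<Longrightarrow> is_path G p \<Longrightarrow> is_path H (map (snd f) p)"
proof (induction p)
  case Nil then show ?case by (simp add: is_path_def)
next
  case (Cons a p)
  show ?case
  proof (cases "p = []")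
    case True then show ?thesis using Cons by (auto simp: is_path_Cons hom_def)
  next
    case False
    then obtain u where u: "u \<in> set (tgt G a)" "u \<in> set (src G (hd p))" and a: "a \<in> edges G"
      and p: "is_path G p" using Cons.prems by (auto simp: is_path_Cons)
    have hp: "hd p \<in> edges G" using p False by (auto simp: is_path_def)
    have "fst f u \<in> set (tgt H (snd f a))" "fst f u \<in> set (src H (snd f (hd p)))"
      using Cons.prems(1) u a hp by (auto simp: hom_def)
    then show ?thesis using Cons.IH[OF Cons.prems(1) p] False a Cons.prems(1)
      by (auto simp: is_path_Cons hom_def hd_map)
  qed
qed

lemma hom_path_from_to: "hom G H f \<Longrightarrow> path_from_to G p x y \<Longrightarrow>
   path_from_to H (map (snd f) p) (fst f x) (fst f y)"
proof -
  assume h: "hom G H f" and p: "path_from_to G p x y"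
  then have ne: "p \<noteq> []" and "hd p \<in> edges G" "last p \<in> edges G"
    by (auto simp: path_from_to_def is_path_def)
  then show ?thesis using h p hom_is_path[OF h]
    by (auto simp: path_from_to_def hom_def hd_map last_map)
qed

lemma outdeg_unique:
  assumes "finite (edges G)" "outdeg G u \<le> 1" "e \<in> edges G" "e' \<in> edges G"
    "u \<in> set (src G e)" "u \<in> set (src G e')"
  shows "e = e'"
proof -
  let ?A = "{(e, i). e \<in> edges G \<and> i < length (src G e) \<and> src G e ! i = u}"
  have fin: "finite ?A"
    by (rule finite_subset[of _ "SIGMA e:edges G. {..<length (src G e)}"]) (use assms(1) in auto)
  obtain i where i: "i < length (src G e)" "src G e ! i = u" using assms(5) by (metis in_set_conv_nth)
  obtain j where j: "j < length (src G e')" "src G e' ! j = u" using assms(6) by (metis in_set_conv_nth)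
  have "(e, i) \<in> ?A" "(e', j) \<in> ?A" using i j assms by auto
  moreover have "card ?A \<le> Suc 0" using assms(2) by (simp add: outdeg_def)
  ultimately have "(e, i) = (e', j)" using card_le_Suc0_iff_eq[OF fin] by blast
  then show ?thesis by simp
qed

lemma indeg_unique:
  assumes "finite (edges G)" "indeg G u \<le> 1" "e \<in> edges G" "e' \<in> edges G"
    "u \<in> set (tgt G e)" "u \<in> set (tgt G e')"
  shows "e = e'"
proof -
  let ?A = "{(e, i). e \<in> edges G \<and> i < length (tgt G e) \<and> tgt G e ! i = u}"
  have fin: "finite ?A"
    by (rule finite_subset[of _ "SIGMA e:edges G. {..<length (tgt G e)}"]) (use assms(1) in auto)
  obtain i where i: "i < length (tgt G e)" "tgt G e ! i = u" using assms(5) by (metis in_set_conv_nth)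
  obtain j where j: "j < length (tgt G e')" "tgt G e' ! j = u" using assms(6) by (metis in_set_conv_nth)
  have "(e, i) \<in> ?A" "(e', j) \<in> ?A" using i j assms by auto
  moreover have "card ?A \<le> Suc 0" using assms(2) by (simp add: indeg_def)
  ultimately have "(e, i) = (e', j)" using card_le_Suc0_iff_eq[OF fin] by blast
  then show ?thesis by simp
qed

lemma not_output: "w \<in> nodes L \<Longrightarrow> w \<notin> outputs L \<Longrightarrow> \<exists>e\<in>edges L. w \<in> set (src L e)"
proof -
  assume "w \<in> nodes L" "w \<notin> outputs L"
  then have "outdeg L w \<noteq> 0" by (simp add: outputs_def)
  then have "{(e, i). e \<in> edges L \<and> i < length (src L e) \<and> src L e ! i = w} \<noteq> {}"
    unfolding outdeg_def by (metis card.empty)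
  then show ?thesis by (auto intro: nth_mem)
qed

lemma not_input: "w \<in> nodes L \<Longrightarrow> w \<notin> inputs L \<Longrightarrow> \<exists>e\<in>edges L. w \<in> set (tgt L e)"
proof -
  assume "w \<in> nodes L" "w \<notin> inputs L"
  then have "indeg L w \<noteq> 0" by (simp add: inputs_def)
  then have "{(e, i). e \<in> edges L \<and> i < length (tgt L e) \<and> tgt L e ! i = w} \<noteq> {}"
    unfolding indeg_def by (metis card.empty)
  then show ?thesis by (auto intro: nth_mem)
qed

lemma input_no_tgt: "finite (edges G) \<Longrightarrow> v \<in> inputs G \<Longrightarrow> e \<in> edges G \<Longrightarrow> v \<notin> set (tgt G e)"
proof
  assume f: "finite (edges G)" and v: "v \<in> inputs G" and e: "e \<in> edges G" and "v \<in> set (tgt G e)"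
  then obtain i where i: "i < length (tgt G e)" "tgt G e ! i = v" by (metis in_set_conv_nth)
  let ?A = "{(e, i). e \<in> edges G \<and> i < length (tgt G e) \<and> tgt G e ! i = v}"
  have fin: "finite ?A"
    by (rule finite_subset[of _ "SIGMA e:edges G. {..<length (tgt G e)}"]) (use f in auto)
  have "(e, i) \<in> ?A" using i e by auto
  then have "card ?A \<noteq> 0" using fin by auto
  then show False using v by (simp add: inputs_def indeg_def)
qed

lemma output_no_src: "finite (edges G) \<Longrightarrow> v \<in> outputs G \<Longrightarrow> e \<in> edges G \<Longrightarrow> v \<notin> set (src G e)"
proof
  assume f: "finite (edges G)" and v: "v \<in> outputs G" and e: "e \<in> edges G" and "v \<in> set (src G e)"
  then obtain i where i: "i < length (src G e)" "src G e ! i = v" by (metis in_set_conv_nth)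
  let ?A = "{(e, i). e \<in> edges G \<and> i < length (src G e) \<and> src G e ! i = v}"
  have fin: "finite ?A"
    by (rule finite_subset[of _ "SIGMA e:edges G. {..<length (src G e)}"]) (use f in auto)
  have "(e, i) \<in> ?A" using i e by auto
  then have "card ?A \<noteq> 0" using fin by auto
  then show False using v by (simp add: outputs_def outdeg_def)
qed

lemma mono_convex:
  assumes maG: "ma G" and finG: "finite (edges G)" and wfL: "wf_hyp Sig L"
    and sc: "strongly_connected L" and mo: "mono L G m"
  shows "convex_match L G m"
proof -
  have h: "hom L G m" using mo by (simp add: mono_def)
  have acyc: "\<nexists>p. is_cycle G p" using maG by (simp add: ma_def)
  have degs: "\<And>v. v \<in> nodes G \<Longrightarrow> outdeg G v \<le> 1 \<and> indeg G v \<le> 1" using maG by (simp add: ma_def)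
  have hn: "\<And>v. v \<in> nodes L \<Longrightarrow> fst m v \<in> nodes G" and he: "\<And>e. e \<in> edges L \<Longrightarrow> snd m e \<in> edges G"
    and hs: "\<And>e. e \<in> edges L \<Longrightarrow> src G (snd m e) = map (fst m) (src L e)"
    and ht: "\<And>e. e \<in> edges L \<Longrightarrow> tgt G (snd m e) = map (fst m) (tgt L e)"
    using h by (simp_all add: hom_def)
  have key_out: "w \<in> outputs L"
    if w: "w \<in> nodes L" and f: "f \<in> edges G" "f \<notin> snd m ` edges L" "fst m w \<in> set (src G f)" for w f
  proof (rule ccontr)
    assume nw: "w \<notin> outputs L"
    obtain e where e: "e \<in> edges L" "w \<in> set (src L e)" using not_output[OF w nw] by blast
    have a1: "fst m w \<in> set (src G (snd m e))" using hs e by simp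
    have a2: "snd m e \<in> edges G" using he e by simp
    have a3: "outdeg G (fst m w) \<le> 1" using degs[OF hn[OF w]] by simp
    have "f = snd m e" by (rule outdeg_unique[OF finG a3 f(1) a2 f(3) a1])
    then show False using f e by auto
  qed
  have key_in: "w \<in> inputs L"
    if w: "w \<in> nodes L" and f: "f \<in> edges G" "f \<notin> snd m ` edges L" "fst m w \<in> set (tgt G f)" for w f
  proof (rule ccontr)
    assume nw: "w \<notin> inputs L"
    obtain e where e: "e \<in> edges L" "w \<in> set (tgt L e)" using not_input[OF w nw] by blast
    have a1: "fst m w \<in> set (tgt G (snd m e))" using ht e by simp
    have a2: "snd m e \<in> edges G" using he e by simp
    have a3: "indeg G (fst m w) \<le> 1" using degs[OF hn[OF w]] by simp
    have "f = snd m e" by (rule indeg_unique[OF finG a3 f(1) a2 f(3) a1])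
    then show False using f e by auto
  qed
  have tgtL: "\<And>e. e \<in> edges L \<Longrightarrow> set (tgt L e) \<subseteq> nodes L" and srcL: "\<And>e. e \<in> edges L \<Longrightarrow> set (src L e) \<subseteq> nodes L"
    using wfL by (auto simp: wf_hyp_def)
  show ?thesis unfolding convex_match_def
  proof (intro conjI mo ballI allI impI)
    fix x x' p assume "x \<in> fst m ` nodes L" "x' \<in> fst m ` nodes L" and pp: "path_from_to G p x x'"
    then obtain v v' where v: "v \<in> nodes L" "x = fst m v" and v': "v' \<in> nodes L" "x' = fst m v'" by auto
    show "set p \<subseteq> snd m ` edges L"
    proof (rule ccontr)
      assume "\<not> set p \<subseteq> snd m ` edges L"
      then have "\<exists>e\<in>set p. e \<notin> snd m ` edges L" by auto
      then obtain xs e ys where p: "p = xs @ e # ys" and e: "e \<notin> snd m ` edges L"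
        and xs: "\<forall>y\<in>set xs. y \<in> snd m ` edges L"
        by (rule split_list_first_propE) auto
      have ip: "is_path G p" using pp by (simp add: path_from_to_def)
      have pe: "set p \<subseteq> edges G" using ip by (simp add: is_path_def)
      have eG: "e \<in> edges G" using pe p by auto
      have ne1: "e # ys \<noteq> []" by simp
      have ipx: "is_path G (xs @ (e # ys))" using ip p by simp
      have ip2: "is_path G (e # ys)"
      proof (cases "xs = []")
        case True then show ?thesis using ipx by simp
      next
        case False then show ?thesis using ipx is_path_append[OF False ne1, of G] by blast
      qed
      obtain w where w: "w \<in> nodes L" "fst m w \<in> set (src G e)"
      proof (cases "xs = []")
        case True
        then show ?thesis using that v pp p by (auto simp: path_from_to_def)
      next
        case False
        then have "last xs \<in> snd m ` edges L" using xs by auto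
        then obtain e0 where e0: "e0 \<in> edges L" "last xs = snd m e0" by auto
        from False ipx obtain u where u: "u \<in> set (tgt G (last xs))" "u \<in> set (src G e)"
          using is_path_append[OF False ne1, of G] by (metis disjoint_iff list.sel(1))
        then have "u \<in> fst m ` set (tgt L e0)" using ht e0 by simp
        then show ?thesis using that u tgtL[OF e0(1)] by auto
      qed
      then have wo: "w \<in> outputs L" using key_out eG e by blast
      have "\<exists>y\<in>set (e # ys). y \<notin> snd m ` edges L" using e by auto
      then obtain as f bs where ab: "e # ys = as @ f # bs" and f: "f \<notin> snd m ` edges L"
        and bs: "\<forall>z\<in>set bs. \<not> z \<notin> snd m ` edges L"
        by (rule split_list_last_propE)
      have "f \<in> set (e # ys)" using ab by simp
      then have fG: "f \<in> edges G" using pe p by auto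
      have ip2': "is_path G ((as @ [f]) @ bs)" using ip2 ab by (metis append_Cons append_assoc append_Nil)
      have ne3: "as @ [f] \<noteq> []" by simp
      have ip3: "is_path G (as @ [f])"
      proof (cases "bs = []")
        case True then show ?thesis using ip2' by simp
      next
        case False then show ?thesis using ip2' is_path_append[OF ne3 False, of G] by blast
      qed
      obtain w' where w': "w' \<in> nodes L" "fst m w' \<in> set (tgt G f)"
      proof (cases "bs = []")
        case True
        have "last p = last (e # ys)" using p by simp
        also have "\<dots> = last (as @ [f])" using ab True by (metis append_Nil2)
        also have "\<dots> = f" by simp
        finally have "last p = f" .
        then show ?thesis using that v' pp by (auto simp: path_from_to_def)
      next
        case False
        then have "hd bs \<in> snd m ` edges L" using bs by auto
        then obtain e0 where e0: "e0 \<in> edges L" "hd bs = snd m e0" by auto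
        from False ip2' obtain u where u: "u \<in> set (tgt G f)" "u \<in> set (src G (hd bs))"
          using is_path_append[OF ne3 False, of G] by (metis disjoint_iff last_snoc)
        then have "u \<in> fst m ` set (src L e0)" using hs e0 by simp
        then show ?thesis using that u srcL[OF e0(1)] by auto
      qed
      then have wi: "w' \<in> inputs L" using key_in fG f by blast
      obtain q where q: "path_from_to L q w' w" using sc wi wo by (auto simp: strongly_connected_def)
      have q': "path_from_to G (map (snd m) q) (fst m w') (fst m w)" using hom_path_from_to[OF h q] .
      have hd3: "hd (as @ [f]) = e"
      proof (cases as)
        case Nil then show ?thesis using ab by simp
      next
        case (Cons a as') then show ?thesis using ab by simp
      qed
      have qne: "map (snd m) q \<noteq> []" using q' by (simp add: path_from_to_def is_path_def)
      have "is_path G (map (snd m) q @ (as @ [f]))"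
        using is_path_append[OF qne, of "as @ [f]" G] q' ip3 hd3 w(2)
        by (auto simp: path_from_to_def)
      moreover have "hd (map (snd m) q @ (as @ [f])) = hd (map (snd m) q)" using qne by simp
      ultimately have "is_cycle G (map (snd m) q @ (as @ [f]))"
        using q' w'(2) by (auto simp: is_cycle_def path_from_to_def)
      then show False using acyc by blast
    qed
  qed
qed

lemma N_rtrancl:
  assumes disj: "\<forall>p\<in>N. \<forall>q\<in>N. p \<noteq> q \<longrightarrow> {fst p, snd p} \<inter> {fst q, snd q} = {}"
    and xy: "(x, y) \<in> (N \<union> N\<inverse>)\<^sup>*"
  shows "x = y \<or> (x, y) \<in> N \<or> (y, x) \<in> N"
  using xy
proof (induction rule: rtrancl_induct)
  case base then show ?case by simp
next
  case (step y z)
  from step.hyps(2) have yz: "(y, z) \<in> N \<or> (z, y) \<in> N" by auto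
  from step.IH show ?case
  proof (elim disjE)
    assume "x = y" then show ?thesis using yz by auto
  next
    assume xy: "(x, y) \<in> N"
    from yz show ?thesis
    proof
      assume yz: "(y, z) \<in> N"
      have "(x, y) = (y, z)" using disj xy yz by fastforce
      then show ?thesis by simp
    next
      assume zy: "(z, y) \<in> N"
      have "(x, y) = (z, y)" using disj xy zy by fastforce
      then show ?thesis by simp
    qed
  next
    assume yx: "(y, x) \<in> N"
    from yz show ?thesis
    proof
      assume yz: "(y, z) \<in> N"
      have "(y, x) = (y, z)" using disj yx yz by fastforce
      then show ?thesis by simp
    next
      assume zy: "(z, y) \<in> N"
      have "(y, x) = (z, y)" using disj yx zy by fastforce
      then show ?thesis by simp
    qed
  qed
qed

lemma hom_comp: "hom A B f \<Longrightarrow> hom B C g \<Longrightarrow> hom A C (mcomp f g)"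
  unfolding hom_def mcomp_def by (simp add: o_def)

theorem mainTheorem9:
  fixes Sig :: "('l \<times> nat \<times> nat) set"
    and Rs :: "('v,'e,'l,'k) rule set"
    and ri rj :: "('v,'e,'l,'k) rule"
    and M :: "('e \<times> 'e) set"
    and S :: "('a,'f,'l) hyp"
    and e1 e2 :: "('v,'e,'a,'f) morph"
    and N :: "('a \<times> 'a) set"
    and S' :: "('b,'g,'l) hyp"
    and eps' :: "('a,'f,'b,'g) morph"
  assumes "left_connected_system Sig Rs"
    and "ri \<in> Rs" and "rj \<in> Rs"
    and "hyperedge_gluing_set (lhs ri) (lhs rj) M"
    and "wf_hyp Sig S"
    and "hyp_pushout (gamma (lhs ri) (lhs rj) M) (lhs ri) (lhs rj) S (fst, fst) (snd, snd) e1 e2"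
    and "node_gluing_set S (lhs ri) (lhs rj) e1 e2 N"
    and "wf_hyp Sig S'"
    and "hyp_coeq (disc N) S S' (fst, id) (snd, id) eps'"
    and "yields_critical_pair Sig ri rj S' (mcomp e1 eps') (mcomp e2 eps')"
  shows "\<forall>r\<in>Rs. \<forall>m. convex_match (lhs r) S m \<longrightarrow> convex_match (lhs r) S' (mcomp m eps')"
proof (intro ballI allI impI)
  fix r m assume r: "r \<in> Rs" and cm: "convex_match (lhs r) S m"
  have lc: "left_connected_rule Sig r" using assms(1) r by (simp add: left_connected_system_def)
  have wfL: "wf_hyp Sig (lhs r)" and sc: "strongly_connected (lhs r)"
    using lc by (simp_all add: left_connected_rule_def)
  have moS: "mono (lhs r) S m" using cm by (simp add: convex_match_def)
  have hm: "hom (lhs r) S m" and injn: "inj_on (fst m) (nodes (lhs r))" and inje: "inj_on (snd m) (edges (lhs r))"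
    using moS by (simp_all add: mono_def)
  have maS': "ma S'" using assms(10) by (simp add: yields_critical_pair_def ma_cospan_def)
  have finS': "finite (edges S')" using assms(8) by (simp add: wf_hyp_def)
  have finS: "finite (edges S)" using assms(5) by (simp add: wf_hyp_def)
  have hq: "hom S S' eps'" using assms(9) by (simp add: hyp_coeq_def)
  have coN: "set_coeq N (nodes S) (nodes S') fst snd (fst eps')"
    using assms(9) by (simp add: hyp_coeq_def disc_def)
  have coE: "set_coeq {} (edges S) (edges S') id id (snd eps')"
    using assms(9) by (simp add: hyp_coeq_def disc_def)
  have Neq: "{(fst a, snd a) | a. a \<in> N} = N" by auto
  have kerN: "\<And>x y. x \<in> nodes S \<Longrightarrow> y \<in> nodes S \<Longrightarrow> fst eps' x = fst eps' y \<Longrightarrow> (x, y) \<in> (N \<union> N\<inverse>)\<^sup>*"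
    using coN unfolding set_coeq_def Neq by blast
  have injE: "inj_on (snd eps') (edges S)"
    using coE unfolding set_coeq_def inj_on_def by simp
  have hc: "hom (lhs r) S' (mcomp m eps')" by (rule hom_comp[OF hm hq])
  have ng: "N \<subseteq> inputs S \<times> outputs S" and disj: "\<forall>p\<in>N. \<forall>q\<in>N. p \<noteq> q \<longrightarrow> {fst p, snd p} \<inter> {fst q, snd q} = {}"
    using assms(7) unfolding node_gluing_set_def Let_def by blast+
  have hmn: "\<And>v. v \<in> nodes (lhs r) \<Longrightarrow> fst m v \<in> nodes S" and hme: "\<And>e. e \<in> edges (lhs r) \<Longrightarrow> snd m e \<in> edges S"
    and hms: "\<And>e. e \<in> edges (lhs r) \<Longrightarrow> src S (snd m e) = map (fst m) (src (lhs r) e)"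
    and hmt: "\<And>e. e \<in> edges (lhs r) \<Longrightarrow> tgt S (snd m e) = map (fst m) (tgt (lhs r) e)"
    using hm by (simp_all add: hom_def)
  have noglue: False if ab: "(fst m xa, fst m xb) \<in> N" and xa: "xa \<in> nodes (lhs r)" and xb: "xb \<in> nodes (lhs r)"
    and ne: "fst m xa \<noteq> fst m xb" for xa xb
  proof -
    have ai: "fst m xa \<in> inputs S" and bo: "fst m xb \<in> outputs S" using ng ab by auto
    have xai: "xa \<in> inputs (lhs r)"
    proof (rule ccontr)
      assume nx: "xa \<notin> inputs (lhs r)"
      obtain e where e: "e \<in> edges (lhs r)" "xa \<in> set (tgt (lhs r) e)" using not_input[OF xa nx] by blast
      have "fst m xa \<in> set (tgt S (snd m e))" using hmt e by simp
      then show False using input_no_tgt[OF finS ai hme[OF e(1)]] by simp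
    qed
    have xbo: "xb \<in> outputs (lhs r)"
    proof (rule ccontr)
      assume nx: "xb \<notin> outputs (lhs r)"
      obtain e where e: "e \<in> edges (lhs r)" "xb \<in> set (src (lhs r) e)" using not_output[OF xb nx] by blast
      have "fst m xb \<in> set (src S (snd m e))" using hms e by simp
      then show False using output_no_src[OF finS bo hme[OF e(1)]] by simp
    qed
    obtain q where q: "path_from_to (lhs r) q xa xb" using sc xai xbo by (auto simp: strongly_connected_def)
    have q': "path_from_to S' (map (snd (mcomp m eps')) q) (fst (mcomp m eps') xa) (fst (mcomp m eps') xb)"
      by (rule hom_path_from_to[OF hc q])
    have "fst eps' (fst m xa) = fst eps' (fst m xb)"
      using coN ab unfolding set_coeq_def by auto
    then have "is_cycle S' (map (snd (mcomp m eps')) q)"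
      using q' by (auto simp: is_cycle_def path_from_to_def mcomp_def)
    then show False using maS' by (simp add: ma_def)
  qed
  have "mono (lhs r) S' (mcomp m eps')"
    unfolding mono_def
  proof (intro conjI hc)
    show "inj_on (fst (mcomp m eps')) (nodes (lhs r))"
    proof (rule inj_onI)
      fix x y assume x: "x \<in> nodes (lhs r)" and y: "y \<in> nodes (lhs r)"
        and eq: "fst (mcomp m eps') x = fst (mcomp m eps') y"
      show "x = y"
      proof (rule ccontr)
        assume "x \<noteq> y"
        then have ne: "fst m x \<noteq> fst m y" using injn x y by (meson inj_onD)
        have "(fst m x, fst m y) \<in> (N \<union> N\<inverse>)\<^sup>*"
          using kerN[OF hmn[OF x] hmn[OF y]] eq by (simp add: mcomp_def)
        then have "(fst m x, fst m y) \<in> N \<or> (fst m y, fst m x) \<in> N"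
          using N_rtrancl[OF disj] ne by blast
        then show False
        proof
          assume "(fst m x, fst m y) \<in> N" then show False using noglue x y ne by blast
        next
          assume "(fst m y, fst m x) \<in> N" then show False using noglue x y ne by metis
        qed
      qed
    qed
    show "inj_on (snd (mcomp m eps')) (edges (lhs r))"
      unfolding mcomp_def using comp_inj_on[OF inje] injE hme
      by (metis image_subsetI inj_on_subset snd_conv)
  qed
  then show "convex_match (lhs r) S' (mcomp m eps')"
    by (rule mono_convex[OF maS' finS' wfL sc])
qed

end
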